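(* Let $(\varphi_\alpha)_{\alpha>0}$ be a family of functions $\varphi_\alpha\colon(0,\infty)\times\mathbb{R}\to\mathbb{R}$ satisfying (F1)–(F3). Then for every $\alpha>0$: (1) for every $\lambda\in\Lambda$ there exists $s_{\alpha,\lambda}\in\Gamma_0(\mathbb{R})$ with $s_{\alpha,\lambda}\ge s_{\alpha,\lambda}(0)=0$ and $\varphi_\alpha(\kappa_\lambda,\cdot)=\operatorname{prox}_{s_{\alpha,\lambda}}$; (2) $\mathcal{R}_\alpha:=\bigoplus_{\lambda\in\Lambda}s_{\alpha,\lambda}(\kappa_\lambda(\cdot))$ is non-negative and belongs to $\Gamma_0(\ell^2(\Lambda))$; (3) for all $(z_\lambda)_\lambda\in\ell^2(\Lambda)$, $\operatorname{prox}_{\mathcal{R}_\alpha}((z_\lambda)_\lambda)=\big(\operatorname{prox}_{s_{\alpha,\lambda}(\kappa_\lambda(\cdot))}(z_\lambda)\big)_\lambda$; (4) for all $z\in\operatorname{dom}(\mathbf{M}_\kappa^+\circ\Phi_{\alpha,\kappa})$ and every $\gamma>0$, $\mathbf{M}_\kappa^+\circ\Phi_{\alpha,\kappa}(z)$ is the unique minimizer over $x\in\ell^2(\Lambda)$ of $\tfrac12\|\mathbf{M}_\kappa x-z\|^2+\mathcal{R}_\alpha(x)$, and it is the unique fixed point of the operator $\operatorname{prox}_{\gamma\mathcal{R}_\alpha}\circ\big(\mathrm{id}-\gamma\mathbf{M}_\kappa(\mathbf{M}_\kappa(\cdot)-z)\big)$ (note $\mathbf{M}_\kappa(\mathbf{M}_\kappa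 x-z)=\nabla\tfrac12\|\mathbf{M}_\kappa x-z\|^2$).
   Context: $\Lambda$ is an at most countable index set and $\kappa=(\kappa_\lambda)_{\lambda\in\Lambda}\in(0,\infty)^\Lambda$ with $\sup_\lambda\kappa_\lambda<\infty$. $\mathbf{M}_\kappa\colon\ell^2(\Lambda)\to\ell^2(\Lambda)$, $(x_\lambda)_\lambda\mapsto(\kappa_\lambda x_\lambda)_\lambda$; $\mathbf{M}_\kappa^+$ is its Moore–Penrose inverse, with domain $\operatorname{ran}(\mathbf{M}_\kappa)=\{(c_\lambda)\in\ell^2(\Lambda):(c_\lambda/\kappa_\lambda)_\lambda\in\ell^2(\Lambda)\}$ and $\mathbf{M}_\kappa^+((c_\lambda)_\lambda)=(c_\lambda/\kappa_\lambda)_\lambda$. Conditions on $\varphi_\alpha\colon(0,\infty)\times\mathbb{R}\to\mathbb{R}$, required for all $\alpha,\kappa>0$: (F1) $\varphi_\alpha(\kappa,\cdot)$ is monotonically increasing (non-decreasing); (F2) $\varphi_\alpha(\kappa,\cdot)$ is nonexpansive (1-Lipschitz); (F3) $\varphi_\alpha(\kappa,0)=0$. $\Phi_{\alpha,\kappa}\colon\ell^2(\Lambda)\to\ell^2(\Lambda)$, $(c_\lambda)_\lambda\mapsto(\varphi_\alpha(\kappa_\lambda,c_\lambda))_\lambda$, and $\operatorname{dom}(\mathbf{M}_\kappa^+\circ\Phi_{\alpha,\kappa})=\{z\in\ell^2(\Lambda):\Phi_{\alpha,\kappa}(z)\in\operatorname{dom}(\mathbf{M}_\kappa^+)\}$.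 $\Gamma_0(H)$ is the set of proper, convex, lower semi-continuous functionals $H\to\mathbb{R}\cup\{\infty\}$ on a Hilbert space $H$; $\operatorname{prox}_f(x)=\operatorname{argmin}_y\tfrac12\|x-y\|^2+f(y)$. For $r_\lambda\colon\mathbb{R}\to[0,\infty]$, $\bigoplus_\lambda r_\lambda$ is the functional $(x_\lambda)_\lambda\mapsto\sum_\lambda r_\lambda(x_\lambda)$ on $\ell^2(\Lambda)$, and $s(\kappa_\lambda(\cdot))$ denotes $x\mapsto s(\kappa_\lambda x)$. *)

theory Defs
  imports "HOL-Analysis.Analysis"
begin

definition l2 :: "'i set \<Rightarrow> ('i \<Rightarrow> real) set" where
  "l2 \<Lambda> = {x. (\<forall>i. i \<notin> \<Lambda> \<longrightarrow> x i = 0) \<and> (\<lambda>i. (x i)\<^sup>2) summable_on \<Lambda>}"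

definition l2_norm :: "'i set \<Rightarrow> ('i \<Rightarrow> real) \<Rightarrow> real" where
  "l2_norm \<Lambda> x = sqrt (\<Sum>\<^sub>\<infinity>i\<in>\<Lambda>. (x i)\<^sup>2)"

definition Gamma0_real :: "(real \<Rightarrow> ereal) \<Rightarrow> bool" where
  "Gamma0_real f \<longleftrightarrow>
     (\<forall>x. f x \<noteq> -\<infinity>) \<and> (\<exists>x. f x \<noteq> \<infinity>) \<and>
     (\<forall>x y t. 0 < t \<and> t < 1 \<longrightarrow>
        f ((1 - t) * x + t * y) \<le> ereal (1 - t) * f x + ereal t * f y) \<and>
     (\<forall>x X. X \<longlonglongrightarrow> x \<longrightarrow> f x \<le> liminf (\<lambda>n. f (X n)))"

text \<open>Gamma_0(l2(Lambda)); lower semicontinuity w.r.t. the l2 norm (sequential form,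
  equivalent in metric spaces).\<close>
definition Gamma0_l2 :: "'i set \<Rightarrow> (('i \<Rightarrow> real) \<Rightarrow> ereal) \<Rightarrow> bool" where
  "Gamma0_l2 \<Lambda> f \<longleftrightarrow>
     (\<forall>x\<in>l2 \<Lambda>. f x \<noteq> -\<infinity>) \<and> (\<exists>x\<in>l2 \<Lambda>. f x \<noteq> \<infinity>) \<and>
     (\<forall>x\<in>l2 \<Lambda>. \<forall>y\<in>l2 \<Lambda>. \<forall>t. 0 < t \<and> t < 1 \<longrightarrow>
        f (\<lambda>i. (1 - t) * x i + t * y i) \<le> ereal (1 - t) * f x + ereal t * f y) \<and>
     (\<forall>x\<in>l2 \<Lambda>. \<forall>X. (\<forall>n. X n \<in> l2 \<Lambda>) \<and>
        (\<lambda>n. l2_norm \<Lambda> (\<lambda>i. X n i - x i)) \<longlonglongrightarrow> 0 \<longrightarrow>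
        f x \<le> liminf (\<lambda>n. f (X n)))"

definition prox_real :: "(real \<Rightarrow> ereal) \<Rightarrow> real \<Rightarrow> real" where
  "prox_real f x = (THE p. \<forall>y. ereal ((x - p)\<^sup>2 / 2) + f p \<le> ereal ((x - y)\<^sup>2 / 2) + f y)"

definition prox_l2 :: "'i set \<Rightarrow> (('i \<Rightarrow> real) \<Rightarrow> ereal) \<Rightarrow> ('i \<Rightarrow> real) \<Rightarrow> ('i \<Rightarrow> real)" where
  "prox_l2 \<Lambda> f x = (THE p. p \<in> l2 \<Lambda> \<and>
     (\<forall>y\<in>l2 \<Lambda>. ereal ((l2_norm \<Lambda> (\<lambda>i. x i - p i))\<^sup>2 / 2) + f p
                 \<le> ereal ((l2_norm \<Lambda> (\<lambda>i. x i - y i))\<^sup>2 / 2) + f y))"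

definition M_op :: "'i set \<Rightarrow> ('i \<Rightarrow> real) \<Rightarrow> ('i \<Rightarrow> real) \<Rightarrow> ('i \<Rightarrow> real)" where
  "M_op \<Lambda> \<kappa> x = (\<lambda>i. if i \<in> \<Lambda> then \<kappa> i * x i else 0)"

definition M_pinv :: "'i set \<Rightarrow> ('i \<Rightarrow> real) \<Rightarrow> ('i \<Rightarrow> real) \<Rightarrow> ('i \<Rightarrow> real)" where
  "M_pinv \<Lambda> \<kappa> c = (\<lambda>i. if i \<in> \<Lambda> then c i / \<kappa> i else 0)"

definition dom_M_pinv :: "'i set \<Rightarrow> ('i \<Rightarrow> real) \<Rightarrow> ('i \<Rightarrow> real) set" where
  "dom_M_pinv \<Lambda> \<kappa> = {c \<in> l2 \<Lambda>. M_pinv \<Lambda> \<kappa> c \<in> l2 \<Lambda>}"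

definition Phi_op :: "(real \<Rightarrow> real \<Rightarrow> real \<Rightarrow> real) \<Rightarrow> real \<Rightarrow> 'i set \<Rightarrow> ('i \<Rightarrow> real)
    \<Rightarrow> ('i \<Rightarrow> real) \<Rightarrow> ('i \<Rightarrow> real)" where
  "Phi_op \<phi> \<alpha> \<Lambda> \<kappa> c = (\<lambda>i. if i \<in> \<Lambda> then \<phi> \<alpha> (\<kappa> i) (c i) else 0)"

definition Reg :: "'i set \<Rightarrow> ('i \<Rightarrow> real) \<Rightarrow> ('i \<Rightarrow> real \<Rightarrow> ereal) \<Rightarrow> ('i \<Rightarrow> real) \<Rightarrow> ereal" where
  "Reg \<Lambda> \<kappa> s x = (\<Sum>\<^sub>\<infinity>i\<in>\<Lambda>. s i (\<kappa> i * x i))"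

end

theory Submission
  imports Defs
begin
locale pfun =
  fixes f :: "real \<Rightarrow> real"
  assumes fmono: "mono f" and flip: "\<And>x y. \<bar>f x - f y\<bar> \<le> \<bar>x - y\<bar>" and f0: "f 0 = 0"
begin

lemma fcont: "continuous_on A f"
proof -
  have "1-lipschitz_on A f"
    by (rule lipschitz_onI) (use flip in \<open>auto simp: dist_real_def\<close>)
  then show ?thesis by (rule lipschitz_on_continuous_on)
qed

definition Psi :: "real \<Rightarrow> real" where
  "Psi x = integral {0..x} f - integral {x..0} f"

lemma fint: "f integrable_on {a..b}"
  by (simp add: fcont integrable_continuous_real)

lemma Psi_shift: assumes "a \<le> 0" "a \<le> x"
  shows "Psi x = integral {a..x} f - integral {a..0} f"
proof (cases "0 \<le> x")
  case True
  have "integral {a..0} f + integral {0..x} f = integral {a..x} f"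
    using Henstock_Kurzweil_Integration.integral_combine[OF assms(1) True fint] .
  moreover have "integral {x..0} f = 0"
    using True by (cases "x = 0") auto
  ultimately show ?thesis unfolding Psi_def by simp
next
  case False
  have "integral {a..x} f + integral {x..0} f = integral {a..0} f"
    using Henstock_Kurzweil_Integration.integral_combine[of a x 0, OF assms(2) _ fint] False by simp
  moreover have "integral {0..x} f = 0"
    using False by simp
  ultimately show ?thesis unfolding Psi_def by simp
qed

lemma Psi_deriv:
  assumes "u \<le> x" "x \<le> v"
  shows "(Psi has_real_derivative f x) (at x within {u..v})"
proof -
  define a where "a = min u 0"
  have d1: "((\<lambda>y. integral {a..y} f) has_real_derivative f x) (at x within {a..v})"
    by (rule integral_has_real_derivative) (use assms a_def fcont in auto)
  have d2: "((\<lambda>y. integral {a..y} f - integral {a..0} f) has_real_derivative f x) (at x within {u..v})"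
    by (rule DERIV_subset[where s="{a..v}"]) (use d1 a_def in \<open>auto intro!: derivative_eq_intros\<close>)
  show ?thesis
    by (rule has_field_derivative_transform_within[OF d2, where d=1]) (use assms in \<open>auto simp: a_def intro!: Psi_shift[symmetric]\<close>)
qed

lemma Psi_lower:
  assumes "u \<le> v" and qd: "\<And>t. u \<le> t \<Longrightarrow> t \<le> v \<Longrightarrow> (q has_real_derivative q' t) (at t within {u..v})"
    and le: "\<And>t. u \<le> t \<Longrightarrow> t \<le> v \<Longrightarrow> q' t \<le> f t"
  shows "q v - q u \<le> Psi v - Psi u"
proof -
  have "\<exists>x\<in>{u..v}. (Psi v - q v) - (Psi u - q u) = (\<lambda>h. (f x - q' x) * h) (v - u)"
  proof (rule mvt_very_simple[OF assms(1)])
    fix x assume "u \<le> x" "x \<le> v"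
    have "((\<lambda>y. Psi y - q y) has_real_derivative (f x - q' x)) (at x within {u..v})"
      by (rule DERIV_diff[OF Psi_deriv qd]) (use \<open>u \<le> x\<close> \<open>x \<le> v\<close> in auto)
    then show "((\<lambda>y. Psi y - q y) has_derivative (\<lambda>h. (f x - q' x) * h)) (at x within {u..v})"
      by (simp add: has_field_derivative_def)
  qed
  then obtain x where "x \<in> {u..v}" "(Psi v - q v) - (Psi u - q u) = (f x - q' x) * (v - u)" by auto
  moreover have "(f x - q' x) * (v - u) \<ge> 0" using le[of x] \<open>x \<in> {u..v}\<close> assms(1) by auto
  ultimately show ?thesis by linarith
qed

lemma Psi_upper:
  assumes "u \<le> v" and qd: "\<And>t. u \<le> t \<Longrightarrow> t \<le> v \<Longrightarrow> (q has_real_derivative q' t) (at t within {u..v})"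
    and le: "\<And>t. u \<le> t \<Longrightarrow> t \<le> v \<Longrightarrow> f t \<le> q' t"
  shows "Psi v - Psi u \<le> q v - q u"
proof -
  have "\<exists>x\<in>{u..v}. (Psi v - q v) - (Psi u - q u) = (\<lambda>h. (f x - q' x) * h) (v - u)"
  proof (rule mvt_very_simple[OF assms(1)])
    fix x assume "u \<le> x" "x \<le> v"
    have "((\<lambda>y. Psi y - q y) has_real_derivative (f x - q' x)) (at x within {u..v})"
      by (rule DERIV_diff[OF Psi_deriv qd]) (use \<open>u \<le> x\<close> \<open>x \<le> v\<close> in auto)
    then show "((\<lambda>y. Psi y - q y) has_derivative (\<lambda>h. (f x - q' x) * h)) (at x within {u..v})"
      by (simp add: has_field_derivative_def)
  qed
  then obtain x where "x \<in> {u..v}" "(Psi v - q v) - (Psi u - q u) = (f x - q' x) * (v - u)" by auto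
  moreover have "(f x - q' x) * (v - u) \<le> 0" using le[of x] \<open>x \<in> {u..v}\<close> assms(1)
    by (simp add: mult_nonpos_nonneg)
  ultimately show ?thesis by linarith
qed

lemma fmono': "x \<le> y \<Longrightarrow> f x \<le> f y" using fmono by (simp add: monoD)

lemma flip1: "x \<le> y \<Longrightarrow> f y - f x \<le> y - x"
  using flip[of y x] by auto

lemma touch: "(f x - f x0)\<^sup>2 / 2 \<le> Psi x - Psi x0 - f x0 * (x - x0)"
proof (cases "x0 \<le> x")
  case True
  define c where "c = f x0"
  define d where "d = f x - c"
  have d0: "0 \<le> d" "d \<le> x - x0" using fmono'[OF True] flip1[OF True] by (auto simp: d_def c_def)
  define m where "m = x - d"
  have A: "(\<lambda>t. c * t) m - (\<lambda>t. c * t) x0 \<le> Psi m - Psi x0"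
    apply (rule Psi_lower[where q'="\<lambda>t. c"])
    using d0 by (auto simp: m_def c_def intro!: derivative_eq_intros fmono')
  have B: "(\<lambda>t. c * t + (t - m)\<^sup>2/2) x - (\<lambda>t. c * t + (t - m)\<^sup>2/2) m \<le> Psi x - Psi m"
  proof (rule Psi_lower[where q'="\<lambda>t. c + (t - m)"])
    show "m \<le> x" using d0 m_def by simp
    show "((\<lambda>t. c * t + (t - m)\<^sup>2 / 2) has_real_derivative c + (t - m)) (at t within {m..x})" for t
      by (auto intro!: derivative_eq_intros)
    show "c + (t - m) \<le> f t" if "m \<le> t" "t \<le> x" for t
      using flip1[of t x] that by (auto simp: m_def d_def)
  qed
  have e1: "x - m = d" "m - m = 0" "f x - f x0 = d" by (auto simp: m_def d_def c_def)
  have B': "c * x + d\<^sup>2 / 2 - c * m \<le> Psi x - Psi m" using B unfolding e1 by simp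
  have "c * (x - x0) = c * x - c * x0" by (simp add: right_diff_distrib)
  then show ?thesis using A B' unfolding e1 c_def by linarith
next
  case False
  then have F: "x \<le> x0" by simp
  define c where "c = f x0"
  define d where "d = c - f x"
  have d0: "0 \<le> d" "d \<le> x0 - x" using fmono'[OF F] flip1[OF F] by (auto simp: d_def c_def)
  define m where "m = x + d"
  have A: "Psi x0 - Psi m \<le> (\<lambda>t. c * t) x0 - (\<lambda>t. c * t) m"
    apply (rule Psi_upper[where q'="\<lambda>t. c"])
    using d0 by (auto simp: m_def c_def intro!: derivative_eq_intros fmono')
  have B: "Psi m - Psi x \<le> (\<lambda>t. c * t + (t - m)\<^sup>2/2) m - (\<lambda>t. c * t + (t - m)\<^sup>2/2) x"
  proof (rule Psi_upper[where q'="\<lambda>t. c + (t - m)"])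
    show "x \<le> m" using d0 m_def by simp
    show "((\<lambda>t. c * t + (t - m)\<^sup>2 / 2) has_real_derivative c + (t - m)) (at t within {x..m})" for t
      by (auto intro!: derivative_eq_intros)
    show "f t \<le> c + (t - m)" if "x \<le> t" "t \<le> m" for t
      using flip1[of x t] that by (auto simp: m_def d_def)
  qed
  have e1: "x - m = - d" "m - m = 0" "f x - f x0 = - d" by (auto simp: m_def d_def c_def)
  have B': "Psi m - Psi x \<le> c * m - (c * x + d\<^sup>2 / 2)" using B unfolding e1 by simp
  have "c * (x - x0) = c * x - c * x0" "(- d)\<^sup>2 = d\<^sup>2" by (simp_all add: right_diff_distrib)
  then show ?thesis using A B' unfolding e1 c_def by linarith
qed

end

context pfun begin

definition Rv :: "real \<Rightarrow> real" where
  "Rv x = (x - f x) * f x + (f x)\<^sup>2 / 2 - Psi x"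

definition sf :: "real \<Rightarrow> ereal" where
  "sf p = (SUP x. ereal ((x - f x) * p + (f x)\<^sup>2 / 2 - Psi x))"

lemma Psi0: "Psi 0 = 0" by (simp add: Psi_def)

lemma sf_ge: "ereal ((x - f x) * p + (f x)\<^sup>2 / 2 - Psi x) \<le> sf p"
  unfolding sf_def by (rule SUP_upper) simp

lemma sf_at: "sf (f y) = ereal (Rv y)"
proof (rule antisym)
  show "sf (f y) \<le> ereal (Rv y)"
    unfolding sf_def
  proof (rule SUP_least)
    fix x
    have t: "(f x - f y)\<^sup>2 / 2 \<le> Psi x - Psi y - f y * (x - y)" by (rule touch)
    have e: "(f x - f y)\<^sup>2 / 2 = (f x)\<^sup>2/2 - f x * f y + (f y)\<^sup>2 / 2"
      by (simp add: power2_eq_square field_simps)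
    have e2: "f y * (x - y) = f y * x - f y * y" "(x - f x) * f y = x * f y - f x * f y"
      "(y - f y) * f y = y * f y - (f y)\<^sup>2" by (simp_all add: algebra_simps power2_eq_square)
    show "ereal ((x - f x) * f y + (f x)\<^sup>2 / 2 - Psi x) \<le> ereal (Rv y)"
      using t unfolding e Rv_def ereal_less_eq e2 by (simp add: mult.commute)
  qed
  show "ereal (Rv y) \<le> sf (f y)"
    using sf_ge[of y "f y"] by (simp add: Rv_def)
qed

lemma sf_sub: "ereal (Rv y + (y - f y) * (q - f y)) \<le> sf q"
proof -
  have "Rv y + (y - f y) * (q - f y) = (y - f y) * q + (f y)\<^sup>2 / 2 - Psi y"
    by (simp add: Rv_def algebra_simps power2_eq_square)
  then show ?thesis using sf_ge[of y q] by simp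
qed

lemma sf_nonneg: "0 \<le> sf p"
  using sf_ge[of 0 p] by (simp add: f0 Psi0 zero_ereal_def)

lemma sf_0: "sf 0 = 0"
  using sf_at[of 0] by (simp add: f0 Rv_def Psi0)

lemma sf_convex:
  assumes "0 < t" "t < 1"
  shows "sf ((1 - t) * x + t * y) \<le> ereal (1 - t) * sf x + ereal t * sf y"
  unfolding sf_def[of "(1 - t) * x + t * y"]
proof (rule SUP_least)
  fix z
  define a where "a = z - f z"
  define b where "b = (f z)\<^sup>2 / 2 - Psi z"
  have "ereal ((z - f z) * ((1 - t) * x + t * y) + (f z)\<^sup>2 / 2 - Psi z)
      = ereal (1 - t) * ereal (a * x + b) + ereal t * ereal (a * y + b)"
    by (simp add: a_def b_def field_simps)
  also have "\<dots> \<le> ereal (1 - t) * sf x + ereal t * sf y"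
    apply (rule add_mono; rule ereal_mult_left_mono)
    using sf_ge[of z x] sf_ge[of z y] assms by (auto simp: a_def b_def add_diff_eq)
  finally show "ereal ((z - f z) * ((1 - t) * x + t * y) + (f z)\<^sup>2 / 2 - Psi z)
      \<le> ereal (1 - t) * sf x + ereal t * sf y" .
qed

lemma sf_lsc:
  assumes "X \<longlonglongrightarrow> x"
  shows "sf x \<le> liminf (\<lambda>n. sf (X n))"
  unfolding sf_def[of x]
proof (rule SUP_least)
  fix z
  have "(\<lambda>n. ereal ((z - f z) * X n + (f z)\<^sup>2 / 2 - Psi z)) \<longlonglongrightarrow> ereal ((z - f z) * x + (f z)\<^sup>2 / 2 - Psi z)"
    by (intro tendsto_intros assms)
  then have "liminf (\<lambda>n. ereal ((z - f z) * X n + (f z)\<^sup>2 / 2 - Psi z)) = ereal ((z - f z) * x + (f z)\<^sup>2 / 2 - Psi z)"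
    by (intro lim_imp_Liminf) auto
  moreover have "liminf (\<lambda>n. ereal ((z - f z) * X n + (f z)\<^sup>2 / 2 - Psi z)) \<le> liminf (\<lambda>n. sf (X n))"
    by (intro Liminf_mono always_eventually allI sf_ge)
  ultimately show "ereal ((z - f z) * x + (f z)\<^sup>2 / 2 - Psi z) \<le> liminf (\<lambda>n. sf (X n))" by simp
qed

lemma sf_Gamma0: "Gamma0_real sf"
  unfolding Gamma0_real_def
proof (intro conjI allI impI)
  show "sf x \<noteq> - \<infinity>" for x using sf_nonneg[of x] by auto
  show "\<exists>x. sf x \<noteq> \<infinity>" using sf_0 by (intro exI[of _ 0]) simp
  show "sf ((1 - t) * x + t * y) \<le> ereal (1 - t) * sf x + ereal t * sf y" if "0 < t \<and> t < 1" for x y t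
    using sf_convex that by auto
  show "sf x \<le> liminf (\<lambda>n. sf (X n))" if "X \<longlonglongrightarrow> x" for x X using sf_lsc that by auto
qed

lemma f_nonneg: "0 \<le> x \<Longrightarrow> 0 \<le> f x" using fmono'[of 0 x] f0 by simp
lemma f_le: "0 \<le> x \<Longrightarrow> f x \<le> x" using flip1[of 0 x] f0 by simp
lemma f_nonpos: "x \<le> 0 \<Longrightarrow> f x \<le> 0" using fmono'[of x 0] f0 by simp
lemma f_ge: "x \<le> 0 \<Longrightarrow> x \<le> f x" using flip1[of x 0] f0 by simp

lemma sf_VI:
  assumes c: "0 < c" and k: "0 < k"
  shows "\<exists>t r. sf (k * t) = ereal r \<and> (\<forall>y. ereal (c * r + (w - t) * (y - t)) \<le> ereal c * sf (k * y))"
proof -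
  define g where "g x = c * k * (x - f x) + f x / k" for x
  define m where "m = min (c * k) (1 / k)"
  have m0: "0 < m" using c k by (simp add: m_def)
  have gc: "continuous_on A g" for A
    unfolding g_def by (intro continuous_intros fcont) (use k in auto)
  have g0: "g 0 = 0" by (simp add: g_def f0)
  have gpos: "m * x \<le> g x" if "0 \<le> x" for x
  proof -
    have "0 \<le> (c * k - m) * (x - f x)" using f_le[OF that] by (intro mult_nonneg_nonneg) (auto simp: m_def)
    moreover have "0 \<le> (1 / k - m) * f x" using f_nonneg[OF that] by (intro mult_nonneg_nonneg) (auto simp: m_def)
    moreover have "g x - m * x = (c * k - m) * (x - f x) + (1 / k - m) * f x"
      using k by (simp add: g_def field_simps)
    ultimately show ?thesis by linarith
  qed
  have gneg: "g x \<le> m * x" if "x \<le> 0" for x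
  proof -
    have "(c * k - m) * (x - f x) \<le> 0" using f_ge[OF that] by (intro mult_nonneg_nonpos) (auto simp: m_def)
    moreover have "(1 / k - m) * f x \<le> 0" using f_nonpos[OF that] by (intro mult_nonneg_nonpos) (auto simp: m_def)
    moreover have "g x - m * x = (c * k - m) * (x - f x) + (1 / k - m) * f x"
      using k by (simp add: g_def field_simps)
    ultimately show ?thesis by linarith
  qed
  obtain z where gz: "g z = w"
  proof (cases "0 \<le> w")
    case True
    have "g (w / m) \<ge> w" using gpos[of "w / m"] True m0 by simp
    then obtain z where "g z = w" using IVT'[of g 0 w "w / m", OF _ _ _ gc] g0 True m0 by auto
    then show ?thesis using that by auto
  next
    case False
    have "g (w / m) \<le> w" using gneg[of "w / m"] False m0 by (simp add: divide_nonpos_pos)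
    then obtain z where "g z = w" using IVT'[of g "w / m" w 0, OF _ _ _ gc] g0 False m0
      by (auto simp: divide_nonpos_pos)
    then show ?thesis using that by auto
  qed
  define t where "t = f z / k"
  have kt: "k * t = f z" using k by (simp add: t_def)
  have wt: "w - t = c * k * (z - f z)" using gz by (auto simp: g_def t_def)
  show ?thesis
  proof (intro exI conjI allI)
    show "sf (k * t) = ereal (Rv z)" using kt sf_at by simp
    fix y
    have "ereal (c * Rv z + (w - t) * (y - t)) = ereal c * ereal (Rv z + (z - f z) * (k * y - f z))"
      using k unfolding wt by (simp add: t_def algebra_simps)
    also have "\<dots> \<le> ereal c * sf (k * y)"
      by (rule ereal_mult_left_mono[OF sf_sub]) (use c in auto)
    finally show "ereal (c * Rv z + (w - t) * (y - t)) \<le> ereal c * sf (k * y)" .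
  qed
qed


end

lemma scalar_strong:
  assumes gt: "g t = ereal r" and vi: "\<And>y. ereal (r + (w - t) * (y - t)) \<le> g y"
  shows "ereal ((w - t)\<^sup>2 / 2) + g t + ereal ((y - t)\<^sup>2 / 2) \<le> ereal ((w - y)\<^sup>2 / 2) + g y"
proof (cases "g y")
  case (real gy)
  have "r + (w - t) * (y - t) \<le> gy" using vi[of y] real by simp
  moreover have "(w - y)\<^sup>2 = (w - t)\<^sup>2 - 2 * ((w - t) * (y - t)) + (y - t)\<^sup>2"
    by (simp add: power2_eq_square algebra_simps)
  ultimately have "(w - t)\<^sup>2 / 2 + r + (y - t)\<^sup>2 / 2 \<le> (w - y)\<^sup>2 / 2 + gy" by linarith
  then show ?thesis using gt real by simp
next
  case PInf then show ?thesis by simp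
next
  case MInf then show ?thesis using vi[of y] by simp
qed

lemma scalar_prox:
  assumes gt: "g t = ereal r" and vi: "\<And>y. ereal (r + (w - t) * (y - t)) \<le> g y"
  shows "prox_real g w = t"
  unfolding prox_real_def
proof (rule the_equality)
  show "\<forall>y. ereal ((w - t)\<^sup>2 / 2) + g t \<le> ereal ((w - y)\<^sup>2 / 2) + g y"
  proof
    fix y
    have "ereal ((w - t)\<^sup>2 / 2) + g t \<le> ereal ((w - t)\<^sup>2 / 2) + g t + ereal ((y - t)\<^sup>2 / 2)"
      using gt by simp
    also have "\<dots> \<le> ereal ((w - y)\<^sup>2 / 2) + g y" by (rule scalar_strong[OF gt vi])
    finally show "ereal ((w - t)\<^sup>2 / 2) + g t \<le> ereal ((w - y)\<^sup>2 / 2) + g y" .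
  qed
  fix p assume p: "\<forall>y. ereal ((w - p)\<^sup>2 / 2) + g p \<le> ereal ((w - y)\<^sup>2 / 2) + g y"
  have 1: "ereal ((w - p)\<^sup>2 / 2) + g p \<le> ereal ((w - t)\<^sup>2 / 2 + r)" using p[rule_format, of t] gt by simp
  have 2: "ereal ((w - t)\<^sup>2 / 2) + g t + ereal ((p - t)\<^sup>2 / 2) \<le> ereal ((w - p)\<^sup>2 / 2) + g p"
    by (rule scalar_strong[OF gt vi])
  from 1 have "g p \<noteq> \<infinity>" by auto
  moreover have "g p \<noteq> -\<infinity>" using vi[of p] by auto
  ultimately obtain gp where gp: "g p = ereal gp" by (cases "g p") auto
  have h1: "(w - p)\<^sup>2 / 2 + gp \<le> (w - t)\<^sup>2 / 2 + r" using 1 gp by simp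
  have h2: "(w - t)\<^sup>2 / 2 + r + (p - t)\<^sup>2 / 2 \<le> (w - p)\<^sup>2 / 2 + gp" using 2 gp gt by simp
  have "(p - t)\<^sup>2 \<le> 0" using h1 h2 by linarith
  then show "p = t" by simp
qed

lemma (in pfun) prox_sf: "prox_real sf = f"
proof
  fix w show "prox_real sf w = f w"
    by (rule scalar_prox[OF sf_at sf_sub])
qed

lemma has_sum_diff':
  fixes f g :: "'a \<Rightarrow> real"
  assumes "(f has_sum a) A" "(g has_sum b) A"
  shows "((\<lambda>x. f x - g x) has_sum (a - b)) A"
  using has_sum_add[OF assms(1) has_sum_uminusI[OF assms(2)]] by simp

lemma ereal_infsum_SUP:
  fixes h :: "'a \<Rightarrow> ereal"
  assumes "\<And>i. i \<in> A \<Longrightarrow> 0 \<le> h i"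
  shows "infsum h A = (SUP F\<in>{F. finite F \<and> F \<subseteq> A}. sum h F)"
  by (rule nonneg_infsum_complete) (use assms in auto)

lemma ereal_sum_le_infsum:
  fixes h :: "'a \<Rightarrow> ereal"
  assumes "\<And>i. i \<in> A \<Longrightarrow> 0 \<le> h i" "finite F" "F \<subseteq> A"
  shows "sum h F \<le> infsum h A"
proof -
  have "sum h F \<le> (SUP F\<in>{F. finite F \<and> F \<subseteq> A}. sum h F)" by (rule SUP_upper) (use assms in auto)
  then show ?thesis using ereal_infsum_SUP[where h=h and A=A] assms(1) by simp
qed

lemma ereal_elem_le_infsum:
  fixes h :: "'a \<Rightarrow> ereal"
  assumes "\<And>i. i \<in> A \<Longrightarrow> 0 \<le> h i" "i \<in> A"
  shows "h i \<le> infsum h A"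
  using ereal_sum_le_infsum[where h=h and A=A and F="{i}"] assms by simp

lemma ereal_infsum_nonneg:
  fixes h :: "'a \<Rightarrow> ereal"
  assumes "\<And>i. i \<in> A \<Longrightarrow> 0 \<le> h i"
  shows "0 \<le> infsum h A"
  by (rule infsum_nonneg) (use assms in auto)

lemma ereal_infsum_cmult:
  fixes h :: "'a \<Rightarrow> ereal"
  assumes "\<And>i. i \<in> A \<Longrightarrow> 0 \<le> h i" "0 \<le> c"
  shows "c * infsum h A = infsum (\<lambda>i. c * h i) A"
proof -
  have nn: "\<And>i. i \<in> A \<Longrightarrow> 0 \<le> c * h i" using assms by simp
  have "c * (SUP F\<in>{F. finite F \<and> F \<subseteq> A}. sum h F) = (SUP F\<in>{F. finite F \<and> F \<subseteq> A}. c * sum h F)"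
    by (rule SUP_ereal_mult_left[symmetric]) (use assms in \<open>auto intro!: sum_nonneg\<close>)
  then have "c * infsum h A = (SUP F\<in>{F. finite F \<and> F \<subseteq> A}. c * sum h F)"
    using ereal_infsum_SUP[where h=h and A=A] assms(1) by simp
  also have "\<dots> = (SUP F\<in>{F. finite F \<and> F \<subseteq> A}. sum (\<lambda>i. c * h i) F)"
    by (rule SUP_cong) (use assms in \<open>auto intro!: sum_ereal_right_distrib\<close>)
  also have "\<dots> = infsum (\<lambda>i. c * h i) A"
    using ereal_infsum_SUP[where h="\<lambda>i. c * h i" and A=A] nn by simp
  finally show ?thesis .
qed

lemma ereal_shift_le:
  fixes X Y :: ereal
  assumes "ereal a + X \<le> ereal b + Y" "0 \<le> X"
  shows "X \<le> ereal (b - a) + Y"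
  using assms by (cases X; cases Y) auto

lemma sum_ineq:
  fixes g :: "'i \<Rightarrow> real \<Rightarrow> ereal"
  assumes ha: "(a has_sum A) \<Lambda>" and hb: "(b has_sum B) \<Lambda>"
    and gnn: "\<And>i x. 0 \<le> g i x"
    and pw: "\<And>i. i \<in> \<Lambda> \<Longrightarrow> ereal (a i) + g i (u i) \<le> ereal (b i) + g i (v i)"
  shows "ereal A + (\<Sum>\<^sub>\<infinity>i\<in>\<Lambda>. g i (u i)) \<le> ereal B + (\<Sum>\<^sub>\<infinity>i\<in>\<Lambda>. g i (v i))"
proof (cases "(\<Sum>\<^sub>\<infinity>i\<in>\<Lambda>. g i (v i)) = \<infinity>")
  case True
  then show ?thesis by simp
next
  case False
  define Gv where "Gv = (\<Sum>\<^sub>\<infinity>i\<in>\<Lambda>. g i (v i))"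
  have Gv0: "0 \<le> Gv" unfolding Gv_def by (rule ereal_infsum_nonneg) (use gnn in auto)
  obtain V where V: "Gv = ereal V" using False Gv0 unfolding Gv_def[symmetric] by (cases Gv) auto
  have pw2: "g i (u i) \<le> ereal (b i - a i) + g i (v i)" if "i \<in> \<Lambda>" for i
    by (rule ereal_shift_le[OF pw[OF that] gnn])
  have lim: "((\<lambda>F. sum (\<lambda>i. b i - a i) F + V) \<longlongrightarrow> (B - A) + V) (finite_subsets_at_top \<Lambda>)"
    using has_sum_diff'[OF hb ha] unfolding has_sum_def by (intro tendsto_intros)
  have "(SUP F\<in>{F. finite F \<and> F \<subseteq> \<Lambda>}. sum (\<lambda>i. g i (u i)) F) \<le> ereal ((B - A) + V)"
  proof (rule SUP_least)
    fix F assume F: "F \<in> {F. finite F \<and> F \<subseteq> \<Lambda>}"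
    show "sum (\<lambda>i. g i (u i)) F \<le> ereal ((B - A) + V)"
    proof (rule tendsto_lowerbound[OF lim[THEN tendsto_ereal]])
      show "\<not> trivial_limit (finite_subsets_at_top \<Lambda>)" by (simp add: finite_subsets_at_top_neq_bot)
      show "\<forall>\<^sub>F x in finite_subsets_at_top \<Lambda>. sum (\<lambda>i. g i (u i)) F \<le> ereal (sum (\<lambda>i. b i - a i) x + V)"
        unfolding eventually_finite_subsets_at_top
      proof (intro exI[of _ F] conjI allI impI)
        show "finite F" "F \<subseteq> \<Lambda>" using F by auto
        fix Y assume Y: "finite Y \<and> F \<subseteq> Y \<and> Y \<subseteq> \<Lambda>"
        have "sum (\<lambda>i. g i (u i)) F \<le> sum (\<lambda>i. g i (u i)) Y"
          by (rule sum_mono2) (use Y gnn in auto)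
        also have "\<dots> \<le> sum (\<lambda>i. ereal (b i - a i) + g i (v i)) Y"
          by (rule sum_mono) (use Y pw2 in auto)
        also have "\<dots> = ereal (sum (\<lambda>i. b i - a i) Y) + sum (\<lambda>i. g i (v i)) Y"
          by (simp add: sum.distrib)
        also have "\<dots> \<le> ereal (sum (\<lambda>i. b i - a i) Y) + Gv"
          unfolding Gv_def by (intro add_left_mono ereal_sum_le_infsum) (use Y gnn in auto)
        finally show "sum (\<lambda>i. g i (u i)) F \<le> ereal (sum (\<lambda>i. b i - a i) Y + V)" by (simp add: V)
      qed
    qed
  qed
  then have "(\<Sum>\<^sub>\<infinity>i\<in>\<Lambda>. g i (u i)) \<le> ereal ((B - A) + V)"
    using ereal_infsum_SUP[where h="\<lambda>i. g i (u i)" and A=\<Lambda>] gnn by simp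
  then have "ereal A + (\<Sum>\<^sub>\<infinity>i\<in>\<Lambda>. g i (u i)) \<le> ereal A + ereal ((B - A) + V)"
    by (rule add_left_mono)
  also have "\<dots> = ereal B + Gv" by (simp add: V)
  finally show ?thesis unfolding Gv_def .
qed

lemma sq_sum_le: "(u + v)\<^sup>2 \<le> 2 * u\<^sup>2 + 2 * (v::real)\<^sup>2"
proof -
  have "0 \<le> (u - v)\<^sup>2" by simp
  then show ?thesis by (simp add: power2_eq_square algebra_simps)
qed

lemma l2_zero: "x \<in> l2 \<Lambda> \<Longrightarrow> i \<notin> \<Lambda> \<Longrightarrow> x i = 0" by (simp add: l2_def)
lemma l2_summable: "x \<in> l2 \<Lambda> \<Longrightarrow> (\<lambda>i. (x i)\<^sup>2) summable_on \<Lambda>" by (simp add: l2_def)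

lemma l2_bound:
  assumes x: "x \<in> l2 \<Lambda>" and z: "\<And>i. i \<notin> \<Lambda> \<Longrightarrow> y i = 0"
    and b: "\<And>i. i \<in> \<Lambda> \<Longrightarrow> \<bar>y i\<bar> \<le> C * \<bar>x i\<bar>"
  shows "y \<in> l2 \<Lambda>"
proof -
  have "(\<lambda>i. C\<^sup>2 * (x i)\<^sup>2) summable_on \<Lambda>" by (rule summable_on_cmult_right[OF l2_summable[OF x]])
  moreover have "(y i)\<^sup>2 \<le> C\<^sup>2 * (x i)\<^sup>2" if "i \<in> \<Lambda>" for i
  proof -
    have "\<bar>y i\<bar>\<^sup>2 \<le> (C * \<bar>x i\<bar>)\<^sup>2" by (rule power_mono[OF b[OF that]]) simp
    then show ?thesis by (simp add: power_mult_distrib)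
  qed
  ultimately have "(\<lambda>i. (y i)\<^sup>2) summable_on \<Lambda>" by (rule summable_on_comparison_test) auto
  then show ?thesis using z by (simp add: l2_def)
qed

lemma l2_lin:
  assumes x: "x \<in> l2 \<Lambda>" and y: "y \<in> l2 \<Lambda>"
  shows "(\<lambda>i. c * x i + d * y i) \<in> l2 \<Lambda>"
proof -
  have "(\<lambda>i. 2 * c\<^sup>2 * (x i)\<^sup>2 + 2 * d\<^sup>2 * (y i)\<^sup>2) summable_on \<Lambda>"
    by (intro summable_on_add summable_on_cmult_right l2_summable x y)
  moreover have "(c * x i + d * y i)\<^sup>2 \<le> 2 * c\<^sup>2 * (x i)\<^sup>2 + 2 * d\<^sup>2 * (y i)\<^sup>2" for i
    using sq_sum_le[of "c * x i" "d * y i"] by (simp add: power_mult_distrib)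
  ultimately have "(\<lambda>i. (c * x i + d * y i)\<^sup>2) summable_on \<Lambda>" by (rule summable_on_comparison_test) auto
  then show ?thesis using x y by (simp add: l2_def)
qed

lemma l2_diff: "x \<in> l2 \<Lambda> \<Longrightarrow> y \<in> l2 \<Lambda> \<Longrightarrow> (\<lambda>i. x i - y i) \<in> l2 \<Lambda>"
  using l2_lin[of x \<Lambda> y 1 "-1"] by simp

lemma l2_0: "(\<lambda>i. 0) \<in> l2 \<Lambda>" by (simp add: l2_def)

lemma l2_norm_sq:
  assumes "x \<in> l2 \<Lambda>"
  shows "((\<lambda>i. (x i)\<^sup>2) has_sum (l2_norm \<Lambda> x)\<^sup>2) \<Lambda>"
proof -
  have "0 \<le> (\<Sum>\<^sub>\<infinity>i\<in>\<Lambda>. (x i)\<^sup>2)" by (rule infsum_nonneg) simp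
  then show ?thesis using l2_summable[OF assms] by (simp add: l2_norm_def)
qed

lemma has_sum_zero_imp:
  fixes h :: "'a \<Rightarrow> real"
  assumes "(h has_sum S) A" "S \<le> 0" "\<And>i. i \<in> A \<Longrightarrow> 0 \<le> h i" "i \<in> A"
  shows "h i = 0"
proof -
  have hs: "((\<lambda>j. h j) has_sum h i) {i}" by (simp add: has_sum_finiteI)
  have "h i \<le> S" using has_sum_mono_neutral[OF hs assms(1)] assms by auto
  then show ?thesis using assms(2) assms(3)[OF assms(4)] by linarith
qed

lemma has_sum_half:
  fixes f :: "'a \<Rightarrow> real"
  shows "(f has_sum S) A \<Longrightarrow> ((\<lambda>i. f i / 2) has_sum S / 2) A"
  using has_sum_cmult_right[where c="1/2" and f=f and A=A] by simp

lemma ereal_strip: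
  fixes G :: ereal
  assumes "ereal a + G + ereal b \<le> ereal c" "0 \<le> G"
  shows "a + b \<le> c"
  using assms by (cases G) auto

lemma sq_le_bound:
  fixes x p :: real
  assumes "(x - p)\<^sup>2 / 2 + p\<^sup>2 / 2 \<le> x\<^sup>2 / 2"
  shows "\<bar>p\<bar> \<le> \<bar>x\<bar>"
proof -
  have e: "(x - p)\<^sup>2 = x\<^sup>2 - 2 * (x * p) + p\<^sup>2" by (simp add: power2_eq_square algebra_simps)
  have "p\<^sup>2 \<le> x * p" using assms e by linarith
  then have "p * p \<le> x * p" by (simp add: power2_eq_square)
  also have "\<dots> \<le> \<bar>x\<bar> * \<bar>p\<bar>" by (metis abs_ge_self abs_mult)
  finally have H: "\<bar>p\<bar> * \<bar>p\<bar> \<le> \<bar>x\<bar> * \<bar>p\<bar>" by (simp add: abs_mult[symmetric])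
  show ?thesis
  proof (cases "p = 0")
    case True then show ?thesis by simp
  next
    case False then have "0 < \<bar>p\<bar>" by simp
    from mult_right_le_imp_le[OF H this] show ?thesis .
  qed
qed

lemma prox_l2_sep:
  fixes g :: "'i \<Rightarrow> real \<Rightarrow> ereal"
  assumes x: "x \<in> l2 \<Lambda>" and gnn: "\<And>i t. 0 \<le> g i t" and g0: "\<And>i. i \<in> \<Lambda> \<Longrightarrow> g i 0 = 0"
    and pz: "\<And>i. i \<notin> \<Lambda> \<Longrightarrow> p i = 0"
    and strong: "\<And>i y. i \<in> \<Lambda> \<Longrightarrow>
       ereal ((x i - p i)\<^sup>2 / 2) + g i (p i) + ereal ((y - p i)\<^sup>2 / 2) \<le> ereal ((x i - y)\<^sup>2 / 2) + g i y"
  shows "p \<in> l2 \<Lambda>" and "prox_l2 \<Lambda> (\<lambda>y. \<Sum>\<^sub>\<infinity>i\<in>\<Lambda>. g i (y i)) x = p"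
proof -
  define G where "G y = (\<Sum>\<^sub>\<infinity>i\<in>\<Lambda>. g i (y i))" for y
  define N where "N y = (l2_norm \<Lambda> (\<lambda>i. x i - y i))\<^sup>2 / 2" for y
  show pl2: "p \<in> l2 \<Lambda>"
  proof (rule l2_bound[OF x pz, where C=1])
    fix i assume i: "i \<in> \<Lambda>"
    have "ereal ((x i - p i)\<^sup>2 / 2) + g i (p i) + ereal ((0 - p i)\<^sup>2 / 2) \<le> ereal ((x i - 0)\<^sup>2 / 2)"
      using strong[OF i, of 0] g0[OF i] by simp
    then have "(x i - p i)\<^sup>2 / 2 + (p i)\<^sup>2 / 2 \<le> (x i)\<^sup>2 / 2"
      using ereal_strip[OF _ gnn] by fastforce
    then show "\<bar>p i\<bar> \<le> 1 * \<bar>x i\<bar>" using sq_le_bound by simp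
  qed
  have key: "ereal (N p + (l2_norm \<Lambda> (\<lambda>i. y i - p i))\<^sup>2 / 2) + G p \<le> ereal (N y) + G y"
    if y: "y \<in> l2 \<Lambda>" for y
    unfolding G_def N_def
  proof (rule sum_ineq[OF _ _ gnn])
    show "((\<lambda>i. (x i - p i)\<^sup>2 / 2 + (y i - p i)\<^sup>2 / 2) has_sum
        ((l2_norm \<Lambda> (\<lambda>i. x i - p i))\<^sup>2 / 2 + (l2_norm \<Lambda> (\<lambda>i. y i - p i))\<^sup>2 / 2)) \<Lambda>"
      by (intro has_sum_add has_sum_half l2_norm_sq[of "\<lambda>i. _ i - _ i", simplified] l2_diff x y pl2)
    show "((\<lambda>i. (x i - y i)\<^sup>2 / 2) has_sum (l2_norm \<Lambda> (\<lambda>i. x i - y i))\<^sup>2 / 2) \<Lambda>"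
      by (intro has_sum_half l2_norm_sq[of "\<lambda>i. _ i - _ i", simplified] l2_diff x y)
    fix i assume i: "i \<in> \<Lambda>"
    show "ereal ((x i - p i)\<^sup>2 / 2 + (y i - p i)\<^sup>2 / 2) + g i (p i) \<le> ereal ((x i - y i)\<^sup>2 / 2) + g i (y i)"
      using strong[OF i, of "y i"] by (simp add: ac_simps)
  qed
  have minp: "ereal (N p) + G p \<le> ereal (N y) + G y" if y: "y \<in> l2 \<Lambda>" for y
  proof -
    have "ereal (N p) + G p \<le> ereal (N p + (l2_norm \<Lambda> (\<lambda>i. y i - p i))\<^sup>2 / 2) + G p"
      by (intro add_right_mono) simp
    also have "\<dots> \<le> ereal (N y) + G y" by (rule key[OF y])
    finally show ?thesis .
  qed
  have G0: "G (\<lambda>i. 0) = 0" unfolding G_def by (rule infsum_0) (use g0 in auto)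
  have Gp_fin: "G p \<noteq> \<infinity>" using minp[OF l2_0] G0 by auto
  have Gp_nn: "0 \<le> G p" unfolding G_def by (rule ereal_infsum_nonneg) (use gnn in auto)
  obtain gp where gp: "G p = ereal gp" using Gp_fin Gp_nn by (cases "G p") auto
  show "prox_l2 \<Lambda> (\<lambda>y. \<Sum>\<^sub>\<infinity>i\<in>\<Lambda>. g i (y i)) x = p"
    unfolding prox_l2_def G_def[symmetric] N_def[symmetric]
  proof (rule the_equality)
    show "p \<in> l2 \<Lambda> \<and> (\<forall>y\<in>l2 \<Lambda>. ereal (N p) + G p \<le> ereal (N y) + G y)"
      using pl2 minp by auto
    fix q assume q: "q \<in> l2 \<Lambda> \<and> (\<forall>y\<in>l2 \<Lambda>. ereal (N q) + G q \<le> ereal (N y) + G y)"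
    have "ereal (N p + (l2_norm \<Lambda> (\<lambda>i. q i - p i))\<^sup>2 / 2) + G p \<le> ereal (N p) + G p"
    proof -
      have k1: "ereal (N p + (l2_norm \<Lambda> (\<lambda>i. q i - p i))\<^sup>2 / 2) + G p \<le> ereal (N q) + G q"
        using key q by blast
      have k2: "ereal (N q) + G q \<le> ereal (N p) + G p" using q pl2 by blast
      show ?thesis using order_trans[OF k1 k2] .
    qed
    then have D: "(l2_norm \<Lambda> (\<lambda>i. q i - p i))\<^sup>2 \<le> 0" using gp by simp
    have hs: "((\<lambda>i. (q i - p i)\<^sup>2) has_sum (l2_norm \<Lambda> (\<lambda>i. q i - p i))\<^sup>2) \<Lambda>"
      using l2_norm_sq[OF l2_diff[of q \<Lambda> p]] q pl2 by simp
    show "q = p"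
    proof
      fix i show "q i = p i"
      proof (cases "i \<in> \<Lambda>")
        case True
        then show ?thesis using has_sum_zero_imp[OF hs D _ True] by simp
      next
        case False
        then show ?thesis using pz l2_zero q by metis
      qed
    qed
  qed
qed

lemma abs_le_l2_norm:
  assumes "z \<in> l2 \<Lambda>" "i \<in> \<Lambda>"
  shows "\<bar>z i\<bar> \<le> l2_norm \<Lambda> z"
proof -
  have hs: "((\<lambda>j. (z j)\<^sup>2) has_sum (z i)\<^sup>2) {i}" by (simp add: has_sum_finiteI)
  have "(z i)\<^sup>2 \<le> (l2_norm \<Lambda> z)\<^sup>2"
    using has_sum_mono_neutral[OF hs l2_norm_sq[OF assms(1)]] assms by auto
  moreover have "0 \<le> l2_norm \<Lambda> z" by (simp add: l2_norm_def infsum_nonneg)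
  ultimately show ?thesis by (metis abs_le_square_iff abs_of_nonneg)
qed

lemma liminf_sum:
  fixes u :: "'a \<Rightarrow> nat \<Rightarrow> ereal"
  assumes "finite F" "\<And>i n. 0 \<le> u i n"
  shows "(\<Sum>i\<in>F. liminf (u i)) \<le> liminf (\<lambda>n. \<Sum>i\<in>F. u i n)"
  using assms(1)
proof (induction F rule: finite_induct)
  case empty
  then show ?case by (simp add: Liminf_const)
next
  case (insert a F)
  have "(\<Sum>i\<in>insert a F. liminf (u i)) = liminf (u a) + (\<Sum>i\<in>F. liminf (u i))"
    using insert by simp
  also have "\<dots> \<le> liminf (u a) + liminf (\<lambda>n. \<Sum>i\<in>F. u i n)"
    by (intro add_left_mono insert.IH)
  also have "\<dots> \<le> liminf (\<lambda>n. u a n + (\<Sum>i\<in>F. u i n))"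
    by (rule Liminf_add_le) (auto intro!: always_eventually sum_nonneg assms(2))
  also have "\<dots> = liminf (\<lambda>n. \<Sum>i\<in>insert a F. u i n)"
    using insert by simp
  finally show ?case .
qed

lemma Reg_Gamma0:
  assumes G: "\<And>i. i \<in> \<Lambda> \<Longrightarrow> Gamma0_real (s i)" and snn: "\<And>i t. 0 \<le> s i t"
    and s0: "\<And>i. i \<in> \<Lambda> \<Longrightarrow> s i 0 = 0"
  shows "Gamma0_l2 \<Lambda> (Reg \<Lambda> \<kappa> s)"
proof -
  have RS: "Reg \<Lambda> \<kappa> s x = (SUP F\<in>{F. finite F \<and> F \<subseteq> \<Lambda>}. \<Sum>i\<in>F. s i (\<kappa> i * x i))" for x
    unfolding Reg_def by (rule ereal_infsum_SUP) (use snn in auto)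
  have sumle: "(\<Sum>i\<in>F. s i (\<kappa> i * x i)) \<le> Reg \<Lambda> \<kappa> s x" if "finite F" "F \<subseteq> \<Lambda>" for F x
    unfolding RS by (rule SUP_upper) (use that in auto)
  have conv: "s i ((1 - t) * a + t * b) \<le> ereal (1 - t) * s i a + ereal t * s i b"
    if "i \<in> \<Lambda>" "0 < t" "t < 1" for i and t :: real and a b
    using G[OF that(1)] that unfolding Gamma0_real_def by blast
  have lsc: "s i a \<le> liminf (\<lambda>n. s i (X n))" if "i \<in> \<Lambda>" "X \<longlonglongrightarrow> a" for i a X
    using G[OF that(1)] that unfolding Gamma0_real_def by blast
  show ?thesis
    unfolding Gamma0_l2_def
  proof (intro conjI ballI allI impI)
    fix x assume "x \<in> l2 \<Lambda>"
    have "0 \<le> Reg \<Lambda> \<kappa> s x" unfolding Reg_def by (rule ereal_infsum_nonneg) (use snn in auto)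
    then show "Reg \<Lambda> \<kappa> s x \<noteq> - \<infinity>" by auto
  next
    have "Reg \<Lambda> \<kappa> s (\<lambda>i. 0) = 0" unfolding Reg_def by (rule infsum_0) (use s0 in auto)
    then show "\<exists>x\<in>l2 \<Lambda>. Reg \<Lambda> \<kappa> s x \<noteq> \<infinity>" using l2_0 by force
  next
    fix x y and t :: real assume xy: "x \<in> l2 \<Lambda>" "y \<in> l2 \<Lambda>" and t: "0 < t \<and> t < 1"
    show "Reg \<Lambda> \<kappa> s (\<lambda>i. (1 - t) * x i + t * y i) \<le> ereal (1 - t) * Reg \<Lambda> \<kappa> s x + ereal t * Reg \<Lambda> \<kappa> s y"
      unfolding RS[of "\<lambda>i. (1 - t) * x i + t * y i"]
    proof (rule SUP_least)
      fix F assume F: "F \<in> {F. finite F \<and> F \<subseteq> \<Lambda>}"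
      have "(\<Sum>i\<in>F. s i (\<kappa> i * ((1 - t) * x i + t * y i)))
          \<le> (\<Sum>i\<in>F. ereal (1 - t) * s i (\<kappa> i * x i) + ereal t * s i (\<kappa> i * y i))"
      proof (rule sum_mono)
        fix i assume "i \<in> F"
        then have i: "i \<in> \<Lambda>" using F by auto
        have "\<kappa> i * ((1 - t) * x i + t * y i) = (1 - t) * (\<kappa> i * x i) + t * (\<kappa> i * y i)"
          by (simp add: algebra_simps)
        then show "s i (\<kappa> i * ((1 - t) * x i + t * y i)) \<le> ereal (1 - t) * s i (\<kappa> i * x i) + ereal t * s i (\<kappa> i * y i)"
          using conv[OF i, of t] t by simp
      qed
      also have "\<dots> = ereal (1 - t) * (\<Sum>i\<in>F. s i (\<kappa> i * x i)) + ereal t * (\<Sum>i\<in>F. s i (\<kappa> i * y i))"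
        by (simp add: sum.distrib sum_ereal_right_distrib snn)
      also have "\<dots> \<le> ereal (1 - t) * Reg \<Lambda> \<kappa> s x + ereal t * Reg \<Lambda> \<kappa> s y"
        by (intro add_mono ereal_mult_left_mono sumle) (use F t in auto)
      finally show "(\<Sum>i\<in>F. s i (\<kappa> i * ((1 - t) * x i + t * y i))) \<le> ereal (1 - t) * Reg \<Lambda> \<kappa> s x + ereal t * Reg \<Lambda> \<kappa> s y" .
    qed
  next
    fix x X assume x: "x \<in> l2 \<Lambda>" and X: "(\<forall>n. X n \<in> l2 \<Lambda>) \<and> (\<lambda>n. l2_norm \<Lambda> (\<lambda>i. X n i - x i)) \<longlonglongrightarrow> 0"
    have conv_i: "(\<lambda>n. \<kappa> i * X n i) \<longlonglongrightarrow> \<kappa> i * x i" if i: "i \<in> \<Lambda>" for i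
    proof -
      have "(\<lambda>n. X n i - x i) \<longlonglongrightarrow> 0"
      proof (rule Lim_null_comparison[OF _ conjunct2[OF X]])
        show "\<forall>\<^sub>F n in sequentially. norm (X n i - x i) \<le> l2_norm \<Lambda> (\<lambda>i. X n i - x i)"
          using abs_le_l2_norm[OF l2_diff[of "X _" \<Lambda> x] i] X x by (auto intro!: always_eventually)
      qed
      then have "(\<lambda>n. X n i) \<longlonglongrightarrow> x i" by (simp add: LIM_zero_iff)
      then show ?thesis by (intro tendsto_intros)
    qed
    show "Reg \<Lambda> \<kappa> s x \<le> liminf (\<lambda>n. Reg \<Lambda> \<kappa> s (X n))"
      unfolding RS[of x]
    proof (rule SUP_least)
      fix F assume F: "F \<in> {F. finite F \<and> F \<subseteq> \<Lambda>}"
      have "(\<Sum>i\<in>F. s i (\<kappa> i * x i)) \<le> (\<Sum>i\<in>F. liminf (\<lambda>n. s i (\<kappa> i * X n i)))"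
        by (rule sum_mono) (use F in \<open>auto intro!: lsc conv_i\<close>)
      also have "\<dots> \<le> liminf (\<lambda>n. \<Sum>i\<in>F. s i (\<kappa> i * X n i))"
        by (rule liminf_sum) (use F snn in auto)
      also have "\<dots> \<le> liminf (\<lambda>n. Reg \<Lambda> \<kappa> s (X n))"
        by (intro Liminf_mono always_eventually allI sumle) (use F in auto)
      finally show "(\<Sum>i\<in>F. s i (\<kappa> i * x i)) \<le> liminf (\<lambda>n. Reg \<Lambda> \<kappa> s (X n))" .
    qed
  qed
qed

lemma ereal_cancel_c:
  assumes "0 < c" "ereal (c * a) \<le> ereal c * X"
  shows "ereal a \<le> X"
  using assms by (cases X) auto

context pfun begin

lemma sf_strong:
  "ereal ((w - f w)\<^sup>2 / 2) + sf (f w) + ereal ((y - f w)\<^sup>2 / 2) \<le> ereal ((w - y)\<^sup>2 / 2) + sf y"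
  by (rule scalar_strong[OF sf_at sf_sub])

lemma scaled_prox:
  fixes w y :: real
  assumes c: "0 < c" and k: "0 < k"
  defines "P \<equiv> prox_real (\<lambda>y. ereal c * sf (k * y)) w"
  shows "ereal ((w - P)\<^sup>2 / 2) + ereal c * sf (k * P) + ereal ((y - P)\<^sup>2 / 2) \<le> ereal ((w - y)\<^sup>2 / 2) + ereal c * sf (k * y)"
proof -
  obtain t r where tr: "sf (k * t) = ereal r" and vi: "\<And>y. ereal (c * r + (w - t) * (y - t)) \<le> ereal c * sf (k * y)"
    using sf_VI[OF c k, of w] by blast
  have gt: "(\<lambda>y. ereal c * sf (k * y)) t = ereal (c * r)" using tr by simp
  have vi': "\<And>y. ereal (c * r + (w - t) * (y - t)) \<le> (\<lambda>y. ereal c * sf (k * y)) y" using vi by simp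
  have "P = t" unfolding P_def by (rule scalar_prox[OF gt vi'])
  then show ?thesis using scalar_strong[OF gt vi', of y] by simp
qed

lemma scaled_prox1:
  fixes w y :: real
  assumes k: "0 < k"
  defines "P \<equiv> prox_real (\<lambda>y. sf (k * y)) w"
  shows "ereal ((w - P)\<^sup>2 / 2) + sf (k * P) + ereal ((y - P)\<^sup>2 / 2) \<le> ereal ((w - y)\<^sup>2 / 2) + sf (k * y)"
  using scaled_prox[of 1 k w y] k unfolding P_def by (simp add: one_ereal_def[symmetric])

lemma sf_fp:
  fixes w y :: real
  assumes c: "0 < c" and k: "0 < k"
  defines "t \<equiv> f w / k"
  shows "ereal (((t - c * k * (k * t - w)) - t)\<^sup>2 / 2) + ereal c * sf (k * t) + ereal ((y - t)\<^sup>2 / 2)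
    \<le> ereal (((t - c * k * (k * t - w)) - y)\<^sup>2 / 2) + ereal c * sf (k * y)"
proof -
  have kt: "k * t = f w" using k by (simp add: t_def)
  have gt: "(\<lambda>y. ereal c * sf (k * y)) t = ereal (c * Rv w)" using kt sf_at by simp
  have vi: "ereal (c * Rv w + ((t - c * k * (k * t - w)) - t) * (y - t)) \<le> (\<lambda>y. ereal c * sf (k * y)) y" for y
  proof -
    have "ereal (c * Rv w + ((t - c * k * (k * t - w)) - t) * (y - t)) = ereal c * ereal (Rv w + (w - f w) * (k * y - f w))"
      using k unfolding kt[symmetric] by (simp add: algebra_simps)
    also have "\<dots> \<le> ereal c * sf (k * y)"
      by (rule ereal_mult_left_mono[OF sf_sub]) (use c in auto)
    finally show ?thesis by simp
  qed
  show ?thesis using scalar_strong[OF gt vi, of y] by simp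
qed

lemma sf_fp_conv:
  assumes c: "0 < c" and k: "0 < k"
    and t: "t = prox_real (\<lambda>y. ereal c * sf (k * y)) (t - c * k * (k * t - w))"
  shows "t = f w / k"
proof -
  define w' where "w' = t - c * k * (k * t - w)"
  obtain t0 r where tr: "sf (k * t0) = ereal r" and vi: "\<And>y. ereal (c * r + (w' - t0) * (y - t0)) \<le> ereal c * sf (k * y)"
    using sf_VI[OF c k, of w'] by blast
  have gt: "(\<lambda>y. ereal c * sf (k * y)) t0 = ereal (c * r)" using tr by simp
  have vi': "\<And>y. ereal (c * r + (w' - t0) * (y - t0)) \<le> (\<lambda>y. ereal c * sf (k * y)) y" using vi by simp
  have "t = t0" using scalar_prox[OF gt vi'] t unfolding w'_def by simp
  then have tr': "sf (k * t) = ereal r" and vi2: "\<And>y. ereal (c * r + (w' - t) * (y - t)) \<le> ereal c * sf (k * y)"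
    using tr vi by auto
  have vs: "ereal (r + (w - k * t) * (q - k * t)) \<le> sf q" for q
  proof (rule ereal_cancel_c[OF c])
    have "c * (r + (w - k * t) * (q - k * t)) = c * r + (w' - t) * (q / k - t)"
      using k unfolding w'_def by (simp add: field_simps)
    then show "ereal (c * (r + (w - k * t) * (q - k * t))) \<le> ereal c * sf q"
      using vi2[of "q / k"] k by simp
  qed
  have "prox_real sf w = k * t" by (rule scalar_prox[OF tr' vs])
  then have "f w = k * t" using prox_sf by simp
  then show ?thesis using k by (simp add: field_simps)
qed

end

theorem lemma3p3:
  fixes \<Lambda> :: "'i set" and \<kappa> :: "'i \<Rightarrow> real"
    and \<phi> :: "real \<Rightarrow> real \<Rightarrow> real \<Rightarrow> real"
  assumes countable: "countable \<Lambda>"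
    and kappa_pos: "\<forall>i\<in>\<Lambda>. \<kappa> i > 0"
    and kappa_bdd: "\<exists>C. \<forall>i\<in>\<Lambda>. \<kappa> i \<le> C"
    and F1: "\<forall>\<alpha>>0. \<forall>k>0. mono (\<phi> \<alpha> k)"
    and F2: "\<forall>\<alpha>>0. \<forall>k>0. \<forall>x y. \<bar>\<phi> \<alpha> k x - \<phi> \<alpha> k y\<bar> \<le> \<bar>x - y\<bar>"
    and F3: "\<forall>\<alpha>>0. \<forall>k>0. \<phi> \<alpha> k 0 = 0"
  shows "\<forall>\<alpha>>0. \<exists>s :: 'i \<Rightarrow> real \<Rightarrow> ereal.
     (\<forall>i\<in>\<Lambda>. Gamma0_real (s i) \<and> (\<forall>t. s i t \<ge> s i 0) \<and> s i 0 = 0 \<and>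
               \<phi> \<alpha> (\<kappa> i) = prox_real (s i))
   \<and> (\<forall>x\<in>l2 \<Lambda>. Reg \<Lambda> \<kappa> s x \<ge> 0) \<and> Gamma0_l2 \<Lambda> (Reg \<Lambda> \<kappa> s)
   \<and> (\<forall>z\<in>l2 \<Lambda>. prox_l2 \<Lambda> (Reg \<Lambda> \<kappa> s) z =
        (\<lambda>i. if i \<in> \<Lambda> then prox_real (\<lambda>t. s i (\<kappa> i * t)) (z i) else 0))
   \<and> (\<forall>z\<in>l2 \<Lambda>. Phi_op \<phi> \<alpha> \<Lambda> \<kappa> z \<in> dom_M_pinv \<Lambda> \<kappa> \<longrightarrow>
        (let xs = M_pinv \<Lambda> \<kappa> (Phi_op \<phi> \<alpha> \<Lambda> \<kappa> z);
             F = (\<lambda>x. ereal ((l2_norm \<Lambda> (\<lambda>i. M_op \<Lambda> \<kappa> x i - z i))\<^sup>2 / 2) + Reg \<Lambda> \<kappa> s x)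
         in xs \<in> l2 \<Lambda> \<and> (\<forall>x\<in>l2 \<Lambda>. F xs \<le> F x)
            \<and> (\<forall>x\<in>l2 \<Lambda>. (\<forall>y\<in>l2 \<Lambda>. F x \<le> F y) \<longrightarrow> x = xs)
            \<and> (\<forall>\<gamma>>0.
                 let T = (\<lambda>x. prox_l2 \<Lambda> (\<lambda>y. ereal \<gamma> * Reg \<Lambda> \<kappa> s y)
                           (\<lambda>i. x i - \<gamma> * M_op \<Lambda> \<kappa> (\<lambda>j. M_op \<Lambda> \<kappa> x j - z j) i))
                 in T xs = xs \<and> (\<forall>x\<in>l2 \<Lambda>. T x = x \<longrightarrow> x = xs))))"
proof (intro allI impI)
  obtain Cb where Cb: "\<forall>i\<in>\<Lambda>. \<kappa> i \<le> Cb" using kappa_bdd by blast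
  have kp: "\<And>i. i \<in> \<Lambda> \<Longrightarrow> 0 < \<kappa> i" using kappa_pos by blast
  have Ml2: "M_op \<Lambda> \<kappa> x \<in> l2 \<Lambda>" if x: "x \<in> l2 \<Lambda>" for x
  proof (rule l2_bound[OF x, where C=Cb])
    show "M_op \<Lambda> \<kappa> x i = 0" if "i \<notin> \<Lambda>" for i using that by (simp add: M_op_def)
    fix i assume i: "i \<in> \<Lambda>"
    have "\<bar>\<kappa> i * x i\<bar> = \<kappa> i * \<bar>x i\<bar>" using kp[OF i] by (simp add: abs_mult)
    also have "\<dots> \<le> Cb * \<bar>x i\<bar>" using Cb i by (intro mult_right_mono) auto
    finally show "\<bar>M_op \<Lambda> \<kappa> x i\<bar> \<le> Cb * \<bar>x i\<bar>" using i by (simp add: M_op_def)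
  qed
  fix \<alpha> :: real assume \<alpha>: "\<alpha> > 0"
  have pfi: "pfun (\<phi> \<alpha> (\<kappa> i))" if i: "i \<in> \<Lambda>" for i
    by unfold_locales (use F1 F2 F3 \<alpha> kp[OF i] in auto)
  define s where "s i = (if i \<in> \<Lambda> then pfun.sf (\<phi> \<alpha> (\<kappa> i)) else (\<lambda>_. 0))" for i
  have s_in: "s i = pfun.sf (\<phi> \<alpha> (\<kappa> i))" if "i \<in> \<Lambda>" for i using that by (simp add: s_def)
  have snn: "0 \<le> s i t" for i t
    using pfun.sf_nonneg[OF pfi] by (cases "i \<in> \<Lambda>") (auto simp: s_def)
  have s0: "s i 0 = 0" if "i \<in> \<Lambda>" for i using pfun.sf_0[OF pfi[OF that]] that by (simp add: s_def)
  have sG: "Gamma0_real (s i)" if "i \<in> \<Lambda>" for i using pfun.sf_Gamma0[OF pfi[OF that]] that by (simp add: s_def)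
  have sprox: "\<phi> \<alpha> (\<kappa> i) = prox_real (s i)" if "i \<in> \<Lambda>" for i
    using pfun.prox_sf[OF pfi[OF that]] that by (simp add: s_def)
  have RegE: "Reg \<Lambda> \<kappa> s = (\<lambda>y. \<Sum>\<^sub>\<infinity>i\<in>\<Lambda>. s i (\<kappa> i * y i))" by (rule ext) (simp add: Reg_def)
  have Rnn: "0 \<le> Reg \<Lambda> \<kappa> s x" for x unfolding Reg_def by (rule ereal_infsum_nonneg) (use snn in auto)
  show "\<exists>s :: 'i \<Rightarrow> real \<Rightarrow> ereal.
     (\<forall>i\<in>\<Lambda>. Gamma0_real (s i) \<and> (\<forall>t. s i t \<ge> s i 0) \<and> s i 0 = 0 \<and>
               \<phi> \<alpha> (\<kappa> i) = prox_real (s i))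
   \<and> (\<forall>x\<in>l2 \<Lambda>. Reg \<Lambda> \<kappa> s x \<ge> 0) \<and> Gamma0_l2 \<Lambda> (Reg \<Lambda> \<kappa> s)
   \<and> (\<forall>z\<in>l2 \<Lambda>. prox_l2 \<Lambda> (Reg \<Lambda> \<kappa> s) z =
        (\<lambda>i. if i \<in> \<Lambda> then prox_real (\<lambda>t. s i (\<kappa> i * t)) (z i) else 0))
   \<and> (\<forall>z\<in>l2 \<Lambda>. Phi_op \<phi> \<alpha> \<Lambda> \<kappa> z \<in> dom_M_pinv \<Lambda> \<kappa> \<longrightarrow>
        (let xs = M_pinv \<Lambda> \<kappa> (Phi_op \<phi> \<alpha> \<Lambda> \<kappa> z);
             F = (\<lambda>x. ereal ((l2_norm \<Lambda> (\<lambda>i. M_op \<Lambda> \<kappa> x i - z i))\<^sup>2 / 2) + Reg \<Lambda> \<kappa> s x)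
         in xs \<in> l2 \<Lambda> \<and> (\<forall>x\<in>l2 \<Lambda>. F xs \<le> F x)
            \<and> (\<forall>x\<in>l2 \<Lambda>. (\<forall>y\<in>l2 \<Lambda>. F x \<le> F y) \<longrightarrow> x = xs)
            \<and> (\<forall>\<gamma>>0.
                 let T = (\<lambda>x. prox_l2 \<Lambda> (\<lambda>y. ereal \<gamma> * Reg \<Lambda> \<kappa> s y)
                           (\<lambda>i. x i - \<gamma> * M_op \<Lambda> \<kappa> (\<lambda>j. M_op \<Lambda> \<kappa> x j - z j) i))
                 in T xs = xs \<and> (\<forall>x\<in>l2 \<Lambda>. T x = x \<longrightarrow> x = xs))))"
  proof (rule exI[of _ s], intro conjI)
    show "\<forall>i\<in>\<Lambda>. Gamma0_real (s i) \<and> (\<forall>t. s i t \<ge> s i 0) \<and> s i 0 = 0 \<and> \<phi> \<alpha> (\<kappa> i) = prox_real (s i)"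
      using sG s0 snn sprox by auto
    show "\<forall>x\<in>l2 \<Lambda>. Reg \<Lambda> \<kappa> s x \<ge> 0" using Rnn by auto
    show "Gamma0_l2 \<Lambda> (Reg \<Lambda> \<kappa> s)" by (rule Reg_Gamma0[OF sG snn s0])
    show "\<forall>z\<in>l2 \<Lambda>. prox_l2 \<Lambda> (Reg \<Lambda> \<kappa> s) z =
        (\<lambda>i. if i \<in> \<Lambda> then prox_real (\<lambda>t. s i (\<kappa> i * t)) (z i) else 0)"
    proof
      fix z assume z: "z \<in> l2 \<Lambda>"
      show "prox_l2 \<Lambda> (Reg \<Lambda> \<kappa> s) z = (\<lambda>i. if i \<in> \<Lambda> then prox_real (\<lambda>t. s i (\<kappa> i * t)) (z i) else 0)"
        unfolding RegE
      proof (rule prox_l2_sep(2)[where g="\<lambda>i t. s i (\<kappa> i * t)", OF z])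
        show "0 \<le> s i (\<kappa> i * t)" for i t by (rule snn)
        show "s i (\<kappa> i * 0) = 0" if "i \<in> \<Lambda>" for i using s0[OF that] by simp
        show "(if i \<in> \<Lambda> then prox_real (\<lambda>t. s i (\<kappa> i * t)) (z i) else 0) = 0" if "i \<notin> \<Lambda>" for i
          using that by simp
        fix i y assume i: "i \<in> \<Lambda>"
        show "ereal ((z i - (if i \<in> \<Lambda> then prox_real (\<lambda>t. s i (\<kappa> i * t)) (z i) else 0))\<^sup>2 / 2) +
          s i (\<kappa> i * (if i \<in> \<Lambda> then prox_real (\<lambda>t. s i (\<kappa> i * t)) (z i) else 0)) +
          ereal ((y - (if i \<in> \<Lambda> then prox_real (\<lambda>t. s i (\<kappa> i * t)) (z i) else 0))\<^sup>2 / 2)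
          \<le> ereal ((z i - y)\<^sup>2 / 2) + s i (\<kappa> i * y)"
          using pfun.scaled_prox1[OF pfi[OF i] kp[OF i], of "z i" y] i by (simp add: s_in)
      qed
    qed
    show "\<forall>z\<in>l2 \<Lambda>. Phi_op \<phi> \<alpha> \<Lambda> \<kappa> z \<in> dom_M_pinv \<Lambda> \<kappa> \<longrightarrow>
        (let xs = M_pinv \<Lambda> \<kappa> (Phi_op \<phi> \<alpha> \<Lambda> \<kappa> z);
             F = (\<lambda>x. ereal ((l2_norm \<Lambda> (\<lambda>i. M_op \<Lambda> \<kappa> x i - z i))\<^sup>2 / 2) + Reg \<Lambda> \<kappa> s x)
         in xs \<in> l2 \<Lambda> \<and> (\<forall>x\<in>l2 \<Lambda>. F xs \<le> F x)
            \<and> (\<forall>x\<in>l2 \<Lambda>. (\<forall>y\<in>l2 \<Lambda>. F x \<le> F y) \<longrightarrow> x = xs)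
            \<and> (\<forall>\<gamma>>0.
                 let T = (\<lambda>x. prox_l2 \<Lambda> (\<lambda>y. ereal \<gamma> * Reg \<Lambda> \<kappa> s y)
                           (\<lambda>i. x i - \<gamma> * M_op \<Lambda> \<kappa> (\<lambda>j. M_op \<Lambda> \<kappa> x j - z j) i))
                 in T xs = xs \<and> (\<forall>x\<in>l2 \<Lambda>. T x = x \<longrightarrow> x = xs)))"
    proof (intro ballI impI)
      fix z assume z: "z \<in> l2 \<Lambda>" and dom: "Phi_op \<phi> \<alpha> \<Lambda> \<kappa> z \<in> dom_M_pinv \<Lambda> \<kappa>"
      define xs where "xs = M_pinv \<Lambda> \<kappa> (Phi_op \<phi> \<alpha> \<Lambda> \<kappa> z)"
      define F where "F x = ereal ((l2_norm \<Lambda> (\<lambda>i. M_op \<Lambda> \<kappa> x i - z i))\<^sup>2 / 2) + Reg \<Lambda> \<kappa> s x" for x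
      have xs_l2: "xs \<in> l2 \<Lambda>" using dom by (simp add: dom_M_pinv_def xs_def)
      have xs_i: "xs i = \<phi> \<alpha> (\<kappa> i) (z i) / \<kappa> i" if "i \<in> \<Lambda>" for i
        using that by (simp add: xs_def M_pinv_def Phi_op_def)
      have xs_o: "xs i = 0" if "i \<notin> \<Lambda>" for i using that by (simp add: xs_def M_pinv_def)
      have kxs: "\<kappa> i * xs i = \<phi> \<alpha> (\<kappa> i) (z i)" if "i \<in> \<Lambda>" for i
        using xs_i[OF that] kp[OF that] by simp
      define NF where "NF x = (l2_norm \<Lambda> (\<lambda>i. M_op \<Lambda> \<kappa> x i - z i))\<^sup>2 / 2" for x
      define D where "D x = (l2_norm \<Lambda> (\<lambda>i. M_op \<Lambda> \<kappa> x i - M_op \<Lambda> \<kappa> xs i))\<^sup>2 / 2" for x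
      have key: "ereal (NF xs + D x) + Reg \<Lambda> \<kappa> s xs \<le> F x" if x: "x \<in> l2 \<Lambda>" for x
        unfolding F_def NF_def[symmetric] RegE
      proof (rule sum_ineq[where g="\<lambda>i t. s i (\<kappa> i * t)", OF _ _ snn])
        show "((\<lambda>i. (M_op \<Lambda> \<kappa> xs i - z i)\<^sup>2 / 2 + (M_op \<Lambda> \<kappa> x i - M_op \<Lambda> \<kappa> xs i)\<^sup>2 / 2) has_sum NF xs + D x) \<Lambda>"
          unfolding NF_def D_def
          by (intro has_sum_add has_sum_half l2_norm_sq[of "\<lambda>i. _ i - _ i", simplified] l2_diff Ml2 x xs_l2 z)
        show "((\<lambda>i. (M_op \<Lambda> \<kappa> x i - z i)\<^sup>2 / 2) has_sum NF x) \<Lambda>"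
          unfolding NF_def
          by (intro has_sum_half l2_norm_sq[of "\<lambda>i. _ i - _ i", simplified] l2_diff Ml2 x z)
        fix i assume i: "i \<in> \<Lambda>"
        have e: "(M_op \<Lambda> \<kappa> xs i - z i)\<^sup>2 = (z i - \<phi> \<alpha> (\<kappa> i) (z i))\<^sup>2"
          "(M_op \<Lambda> \<kappa> x i - M_op \<Lambda> \<kappa> xs i)\<^sup>2 = (\<kappa> i * x i - \<phi> \<alpha> (\<kappa> i) (z i))\<^sup>2"
          "(M_op \<Lambda> \<kappa> x i - z i)\<^sup>2 = (z i - \<kappa> i * x i)\<^sup>2"
          using i kxs[OF i] by (simp_all add: M_op_def power2_commute)
        show "ereal ((M_op \<Lambda> \<kappa> xs i - z i)\<^sup>2 / 2 + (M_op \<Lambda> \<kappa> x i - M_op \<Lambda> \<kappa> xs i)\<^sup>2 / 2) + s i (\<kappa> i * xs i)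
            \<le> ereal ((M_op \<Lambda> \<kappa> x i - z i)\<^sup>2 / 2) + s i (\<kappa> i * x i)"
          unfolding e kxs[OF i] s_in[OF i]
          using pfun.sf_strong[OF pfi[OF i], of "z i" "\<kappa> i * x i"] by (simp add: ac_simps)
      qed
      have Dnn: "0 \<le> D x" for x by (simp add: D_def)
      have Fmin: "F xs \<le> F x" if x: "x \<in> l2 \<Lambda>" for x
      proof -
        have "F xs \<le> ereal (NF xs + D x) + Reg \<Lambda> \<kappa> s xs"
          unfolding F_def NF_def[symmetric] by (intro add_right_mono) (use Dnn in simp)
        also have "\<dots> \<le> F x" by (rule key[OF x])
        finally show ?thesis .
      qed
      have Funiq: "x = xs" if x: "x \<in> l2 \<Lambda>" and xm: "\<forall>y\<in>l2 \<Lambda>. F x \<le> F y" for x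
      proof -
        have "Reg \<Lambda> \<kappa> s (\<lambda>i. 0) = 0" unfolding Reg_def by (rule infsum_0) (use s0 in auto)
        then have "F (\<lambda>i. 0) \<noteq> \<infinity>" by (simp add: F_def)
        then have "F xs \<noteq> \<infinity>" using Fmin[OF l2_0] by auto
        then have "Reg \<Lambda> \<kappa> s xs \<noteq> \<infinity>" by (simp add: F_def)
        then obtain r where r: "Reg \<Lambda> \<kappa> s xs = ereal r" using Rnn[of xs] by (cases "Reg \<Lambda> \<kappa> s xs") auto
        have "ereal (NF xs + D x) + Reg \<Lambda> \<kappa> s xs \<le> ereal (NF xs) + Reg \<Lambda> \<kappa> s xs"
          using order_trans[OF key[OF x] xm[rule_format, OF xs_l2]] by (simp add: F_def NF_def)
        then have D0: "(l2_norm \<Lambda> (\<lambda>i. M_op \<Lambda> \<kappa> x i - M_op \<Lambda> \<kappa> xs i))\<^sup>2 \<le> 0"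
          using r by (simp add: D_def)
        have hs: "((\<lambda>i. (M_op \<Lambda> \<kappa> x i - M_op \<Lambda> \<kappa> xs i)\<^sup>2) has_sum (l2_norm \<Lambda> (\<lambda>i. M_op \<Lambda> \<kappa> x i - M_op \<Lambda> \<kappa> xs i))\<^sup>2) \<Lambda>"
          by (intro l2_norm_sq[of "\<lambda>i. _ i - _ i", simplified] l2_diff Ml2 x xs_l2)
        show "x = xs"
        proof
          fix i show "x i = xs i"
          proof (cases "i \<in> \<Lambda>")
            case True
            then have "(M_op \<Lambda> \<kappa> x i - M_op \<Lambda> \<kappa> xs i)\<^sup>2 = 0" using has_sum_zero_imp[OF hs D0 _ True] by simp
            then show ?thesis using True kp[OF True] by (simp add: M_op_def)
          next
            case False
            then show ?thesis using l2_zero[OF x] xs_o by simp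
          qed
        qed
      qed
      have FP: "\<forall>\<gamma>>0.
                 let T = (\<lambda>x. prox_l2 \<Lambda> (\<lambda>y. ereal \<gamma> * Reg \<Lambda> \<kappa> s y)
                           (\<lambda>i. x i - \<gamma> * M_op \<Lambda> \<kappa> (\<lambda>j. M_op \<Lambda> \<kappa> x j - z j) i))
                 in T xs = xs \<and> (\<forall>x\<in>l2 \<Lambda>. T x = x \<longrightarrow> x = xs)"
      proof (intro allI impI)
        fix \<gamma> :: real assume \<gamma>: "0 < \<gamma>"
        have TE: "(\<lambda>y. ereal \<gamma> * Reg \<Lambda> \<kappa> s y) = (\<lambda>y. \<Sum>\<^sub>\<infinity>i\<in>\<Lambda>. ereal \<gamma> * s i (\<kappa> i * y i))"
          by (rule ext) (use \<gamma> snn in \<open>simp add: Reg_def ereal_infsum_cmult\<close>)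
        define W where "W x = (\<lambda>i. x i - \<gamma> * M_op \<Lambda> \<kappa> (\<lambda>j. M_op \<Lambda> \<kappa> x j - z j) i)" for x
        have W_l2: "W x \<in> l2 \<Lambda>" if x: "x \<in> l2 \<Lambda>" for x
          using l2_lin[OF x Ml2[OF l2_diff[OF Ml2[OF x] z]], of 1 "- \<gamma>"] by (simp add: W_def)
        have W_i: "W x i = x i - \<gamma> * \<kappa> i * (\<kappa> i * x i - z i)" if "i \<in> \<Lambda>" for x i
          using that by (simp add: W_def M_op_def)
        have gnn: "0 \<le> ereal \<gamma> * s i t" for i t using \<gamma> snn by simp
        have g0: "ereal \<gamma> * s i (\<kappa> i * 0) = 0" if "i \<in> \<Lambda>" for i using s0[OF that] by simp
        have T1: "prox_l2 \<Lambda> (\<lambda>y. ereal \<gamma> * Reg \<Lambda> \<kappa> s y) (W xs) = xs"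
          unfolding TE
        proof (rule prox_l2_sep(2)[where g="\<lambda>i t. ereal \<gamma> * s i (\<kappa> i * t)", OF W_l2[OF xs_l2] gnn g0 xs_o])
          fix i y assume i: "i \<in> \<Lambda>"
          show "ereal ((W xs i - xs i)\<^sup>2 / 2) + ereal \<gamma> * s i (\<kappa> i * xs i) + ereal ((y - xs i)\<^sup>2 / 2)
              \<le> ereal ((W xs i - y)\<^sup>2 / 2) + ereal \<gamma> * s i (\<kappa> i * y)"
            using pfun.sf_fp[OF pfi[OF i] \<gamma> kp[OF i], of "z i" y] i
            unfolding W_i[OF i] s_in[OF i] xs_i[OF i] by (simp add: mult.assoc)
        qed
        have T2: "x = xs" if x: "x \<in> l2 \<Lambda>" and fx: "prox_l2 \<Lambda> (\<lambda>y. ereal \<gamma> * Reg \<Lambda> \<kappa> s y) (W x) = x" for x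
        proof -
          define p where "p i = (if i \<in> \<Lambda> then prox_real (\<lambda>t. ereal \<gamma> * s i (\<kappa> i * t)) (W x i) else 0)" for i
          have "prox_l2 \<Lambda> (\<lambda>y. ereal \<gamma> * Reg \<Lambda> \<kappa> s y) (W x) = p"
            unfolding TE
          proof (rule prox_l2_sep(2)[where g="\<lambda>i t. ereal \<gamma> * s i (\<kappa> i * t)", OF W_l2[OF x] gnn g0])
            show "p i = 0" if "i \<notin> \<Lambda>" for i using that by (simp add: p_def)
            fix i y assume i: "i \<in> \<Lambda>"
            show "ereal ((W x i - p i)\<^sup>2 / 2) + ereal \<gamma> * s i (\<kappa> i * p i) + ereal ((y - p i)\<^sup>2 / 2)
              \<le> ereal ((W x i - y)\<^sup>2 / 2) + ereal \<gamma> * s i (\<kappa> i * y)"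
              using pfun.scaled_prox[OF pfi[OF i] \<gamma> kp[OF i], of "W x i" y] i
              unfolding p_def s_in[OF i] by simp
          qed
          then have xp: "x = p" using fx by simp
          show "x = xs"
          proof
            fix i show "x i = xs i"
            proof (cases "i \<in> \<Lambda>")
              case True
              have "x i = prox_real (\<lambda>t. ereal \<gamma> * pfun.sf (\<phi> \<alpha> (\<kappa> i)) (\<kappa> i * t)) (x i - \<gamma> * \<kappa> i * (\<kappa> i * x i - z i))"
                using fun_cong[OF xp, of i] True unfolding p_def W_i[OF True] s_in[OF True] by simp
              then have "x i = \<phi> \<alpha> (\<kappa> i) (z i) / \<kappa> i"
                by (rule pfun.sf_fp_conv[OF pfi[OF True] \<gamma> kp[OF True]])
              then show ?thesis using xs_i[OF True] by simp
            next
              case False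
              then show ?thesis using l2_zero[OF x] xs_o by simp
            qed
          qed
        qed
        show "let T = (\<lambda>x. prox_l2 \<Lambda> (\<lambda>y. ereal \<gamma> * Reg \<Lambda> \<kappa> s y)
                           (\<lambda>i. x i - \<gamma> * M_op \<Lambda> \<kappa> (\<lambda>j. M_op \<Lambda> \<kappa> x j - z j) i))
                 in T xs = xs \<and> (\<forall>x\<in>l2 \<Lambda>. T x = x \<longrightarrow> x = xs)"
          unfolding Let_def W_def[symmetric] using T1 T2 by blast
      qed
      show "let xs = M_pinv \<Lambda> \<kappa> (Phi_op \<phi> \<alpha> \<Lambda> \<kappa> z);
             F = (\<lambda>x. ereal ((l2_norm \<Lambda> (\<lambda>i. M_op \<Lambda> \<kappa> x i - z i))\<^sup>2 / 2) + Reg \<Lambda> \<kappa> s x)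
         in xs \<in> l2 \<Lambda> \<and> (\<forall>x\<in>l2 \<Lambda>. F xs \<le> F x)
            \<and> (\<forall>x\<in>l2 \<Lambda>. (\<forall>y\<in>l2 \<Lambda>. F x \<le> F y) \<longrightarrow> x = xs)
            \<and> (\<forall>\<gamma>>0.
                 let T = (\<lambda>x. prox_l2 \<Lambda> (\<lambda>y. ereal \<gamma> * Reg \<Lambda> \<kappa> s y)
                           (\<lambda>i. x i - \<gamma> * M_op \<Lambda> \<kappa> (\<lambda>j. M_op \<Lambda> \<kappa> x j - z j) i))
                 in T xs = xs \<and> (\<forall>x\<in>l2 \<Lambda>. T x = x \<longrightarrow> x = xs))"
        unfolding Let_def xs_def[symmetric]
        using xs_l2 Fmin[unfolded F_def] Funiq[unfolded F_def] FP[unfolded Let_def] by blast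
    qed
  qed
qed

end
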